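(* Let $\mathcal{O}$ be an oriented matroid of rank $r$ on $E$, $f\in E$, $I=[e_1,\dots,e_k]$ ($k\le r$) an ordered set of independent elements (possibly $f\in I$), and $\mathcal{O}'=\mathcal{O}\cup p=\mathcal{O}[e_1^+,\dots,e_k^+]$. Let $X,Y$ be conformal cocircuits of $\mathcal{O}'$ with $X_p=Y_p\neq 0$ and $X\circ Y$ an edge of $\mathcal{O}'$, and suppose both $X$ and $Y$ have index $i$ with respect to $I$, where $1\le i\le k$ and $f\ne e_i$ (so $X_{e_i}=Y_{e_i}\ne0$). If $X_f\neq Y_f$, or $X_f=Y_f=0$, or $\mathrm{Dir}_{(\mathcal{O}',e_i,f)}(X,Y)\neq 0$, then $\mathrm{Dir}_{(\mathcal{O}',e_i,f)}(X,Y)=\mathrm{Dir}_{(\mathcal{O}',p,f)}(X,Y)$, and, whenever $X_f=Y_f\neq 0$, also $\mathrm{Dir}_{(\mathcal{O}',f,e_i)}(X,Y)=\mathrm{Dir}_{(\mathcal{O}',f,p)}(X,Y)$.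
   Context: Oriented matroid $\mathcal{O}$ of rank $r$ on finite $E$, given by its cocircuits (sign vectors in $\{+,-,0\}^E$). Notation: $z(X)$ zero set, $\operatorname{sep}(X,Y)=\{e:X_e=-Y_e\ne0\}$, $(X\circ Y)_e=X_e$ if $X_e\ne0$, else $Y_e$; conformal means $\operatorname{sep}=\emptyset$. An edge is a covector whose zero set is a flat of rank $r-2$; cocircuits $X\ne\pm Y$ are comodular if $X\circ Y$ is an edge. For comodular $X,Y$ and $e\in\operatorname{sep}(X,Y)$, cocircuit elimination of $e$ between $X$ and $Y$ yields the unique cocircuit $Z$ with $Z_e=0$ and $Z_h=(X\circ Y)_h$ for $h\notin\operatorname{sep}(X,Y)$. For an oriented matroid $\mathcal{Q}$ on ground set $E'$, distinct $a,b\in E'$ and comodular cocircuits $X,Y$ of $\mathcal{Q}$ with $X_a=Y_a\ne0$, let $Z$ be obtained by eliminating $a$ between $-X$ and $Y$ and set $\mathrm{Dir}_{(\mathcal{Q},a,b)}(X,Y)=Z_b$; if $X_a\ne0$ and $Y_a=0$ set $\mathrm{Dir}_{(\mathcal{Q},a,b)}(X,Y)=Y_b$, and if $X_a=0$, $Y_a\neq 0$ set it to $-X_b$. The index of a cocircuit $Y$ w.r.t. $I=[e_1,\dots,e_k]$ is the smallest $i$ with $Y_{e_i}\ne0$, or $k+1$ if none. The positive lexicographic extension $\mathcal{O}[e_1^+,\dots,e_k^+]=\mathcal{O}\cup p$ is the single-element extension with localization $\sigma(Y)=Y_{e_i}$ if the index $i$ of $Y$ is $\le k$, and $\sigma(Y)=0$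 otherwise. *)

theory Defs
  imports Main
begin

text \<open>Sign vectors on a ground set E are functions into {-1,0,1} that vanish outside E.
  An oriented matroid is given by its set of cocircuits.\<close>

definition sign_vector :: "'a set \<Rightarrow> ('a \<Rightarrow> int) \<Rightarrow> bool" where
  "sign_vector E X \<longleftrightarrow> (\<forall>e. X e \<in> {-1, 0, 1}) \<and> (\<forall>e. e \<notin> E \<longrightarrow> X e = 0)"

definition zerovec :: "'a \<Rightarrow> int" where
  "zerovec = (\<lambda>e. 0)"

definition neg :: "('a \<Rightarrow> int) \<Rightarrow> 'a \<Rightarrow> int" where
  "neg X = (\<lambda>e. - X e)"

definition supp :: "'a set \<Rightarrow> ('a \<Rightarrow> int) \<Rightarrow> 'a set" where
  "supp E X = {e \<in> E. X e \<noteq> 0}"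

definition zset :: "'a set \<Rightarrow> ('a \<Rightarrow> int) \<Rightarrow> 'a set" where
  "zset E X = {e \<in> E. X e = 0}"

definition sep :: "'a set \<Rightarrow> ('a \<Rightarrow> int) \<Rightarrow> ('a \<Rightarrow> int) \<Rightarrow> 'a set" where
  "sep E X Y = {e \<in> E. X e = - Y e \<and> X e \<noteq> 0}"

definition comp :: "('a \<Rightarrow> int) \<Rightarrow> ('a \<Rightarrow> int) \<Rightarrow> 'a \<Rightarrow> int" where
  "comp X Y = (\<lambda>e. if X e \<noteq> 0 then X e else Y e)"

definition conformal :: "'a set \<Rightarrow> ('a \<Rightarrow> int) \<Rightarrow> ('a \<Rightarrow> int) \<Rightarrow> bool" where
  "conformal E X Y \<longleftrightarrow> sep E X Y = {}"

definition is_OM :: "'a set \<Rightarrow> ('a \<Rightarrow> int) set \<Rightarrow> bool" where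
  "is_OM E C \<longleftrightarrow> finite E
     \<and> (\<forall>X\<in>C. sign_vector E X)
     \<and> zerovec \<notin> C
     \<and> (\<forall>X\<in>C. neg X \<in> C)
     \<and> (\<forall>X\<in>C. \<forall>Y\<in>C. supp E X \<subseteq> supp E Y \<longrightarrow> X = Y \<or> X = neg Y)
     \<and> (\<forall>X\<in>C. \<forall>Y\<in>C. \<forall>e. X \<noteq> neg Y \<and> e \<in> sep E X Y \<longrightarrow>
          (\<exists>Z\<in>C. Z e = 0 \<and> (\<forall>g. Z g > 0 \<longrightarrow> X g > 0 \<or> Y g > 0)
                          \<and> (\<forall>g. Z g < 0 \<longrightarrow> X g < 0 \<or> Y g < 0)))"

text \<open>Underlying matroid: hyperplanes are zero sets of cocircuits; the closure of A is the
  intersection of all hyperplanes containing A (E if there is none).\<close>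
definition om_cl :: "'a set \<Rightarrow> ('a \<Rightarrow> int) set \<Rightarrow> 'a set \<Rightarrow> 'a set" where
  "om_cl E C A = {e \<in> E. \<forall>X\<in>C. A \<subseteq> zset E X \<longrightarrow> e \<in> zset E X}"

definition om_indep :: "'a set \<Rightarrow> ('a \<Rightarrow> int) set \<Rightarrow> 'a set \<Rightarrow> bool" where
  "om_indep E C A \<longleftrightarrow> A \<subseteq> E \<and> (\<forall>a\<in>A. a \<notin> om_cl E C (A - {a}))"

definition om_rank_of :: "'a set \<Rightarrow> ('a \<Rightarrow> int) set \<Rightarrow> 'a set \<Rightarrow> nat" where
  "om_rank_of E C A = Max {card B | B. B \<subseteq> A \<and> om_indep E C B}"

definition om_rank :: "'a set \<Rightarrow> ('a \<Rightarrow> int) set \<Rightarrow> nat" where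
  "om_rank E C = om_rank_of E C E"

inductive_set covectors :: "('a \<Rightarrow> int) set \<Rightarrow> ('a \<Rightarrow> int) set" for C where
  zero: "zerovec \<in> covectors C"
| step: "X \<in> C \<Longrightarrow> V \<in> covectors C \<Longrightarrow> comp X V \<in> covectors C"

definition is_edge :: "'a set \<Rightarrow> ('a \<Rightarrow> int) set \<Rightarrow> ('a \<Rightarrow> int) \<Rightarrow> bool" where
  "is_edge E C V \<longleftrightarrow> V \<in> covectors C
      \<and> int (om_rank_of E C (zset E V)) = int (om_rank E C) - 2"

text \<open>Cocircuit elimination of e between comodular X and Y: the unique cocircuit Z with
  Z_e = 0 and Z_h = (X \<circ> Y)_h for h not in sep(X,Y).\<close>
definition elim :: "'a set \<Rightarrow> ('a \<Rightarrow> int) set \<Rightarrow> ('a \<Rightarrow> int) \<Rightarrow> ('a \<Rightarrow> int) \<Rightarrow> 'a \<Rightarrow> 'a \<Rightarrow> int" where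
  "elim E C X Y e = (THE Z. Z \<in> C \<and> Z e = 0 \<and> (\<forall>h\<in>E. h \<notin> sep E X Y \<longrightarrow> Z h = comp X Y h))"

text \<open>Dir_{(Q,a,b)}(X,Y); the value 0 in the remaining (undefined) cases is a dummy.\<close>
definition Dir :: "'a set \<Rightarrow> ('a \<Rightarrow> int) set \<Rightarrow> 'a \<Rightarrow> 'a \<Rightarrow> ('a \<Rightarrow> int) \<Rightarrow> ('a \<Rightarrow> int) \<Rightarrow> int" where
  "Dir E C a b X Y =
     (if X a = Y a \<and> X a \<noteq> 0 then elim E C (neg X) Y a b
      else if X a \<noteq> 0 \<and> Y a = 0 then Y b
      else if X a = 0 \<and> Y a \<noteq> 0 then - X b
      else 0)"

text \<open>Index of Y w.r.t. I = [e_1,...,e_k], 0-based: smallest i < k with Y (I!i) \<noteq> 0,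
  or k = length I if none.\<close>
definition cocirc_index :: "'a list \<Rightarrow> ('a \<Rightarrow> int) \<Rightarrow> nat" where
  "cocirc_index I Y = (if \<exists>i<length I. Y (I ! i) \<noteq> 0
       then (LEAST i. i < length I \<and> Y (I ! i) \<noteq> 0) else length I)"

definition lex_sigma :: "'a list \<Rightarrow> ('a \<Rightarrow> int) \<Rightarrow> int" where
  "lex_sigma I Y = (if cocirc_index I Y < length I then Y (I ! cocirc_index I Y) else 0)"

definition restr_del :: "'a \<Rightarrow> ('a \<Rightarrow> int) \<Rightarrow> 'a \<Rightarrow> int" where
  "restr_del p Y = Y(p := 0)"

definition deletion :: "('a \<Rightarrow> int) set \<Rightarrow> 'a \<Rightarrow> ('a \<Rightarrow> int) set" where
  "deletion C p = {restr_del p Y | Y. Y \<in> C \<and> restr_del p Y \<noteq> zerovec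
      \<and> (\<forall>Y'\<in>C. restr_del p Y' \<noteq> zerovec \<longrightarrow>
            \<not> ({e. restr_del p Y' e \<noteq> 0} \<subset> {e. restr_del p Y e \<noteq> 0}))}"

definition single_ext :: "'a set \<Rightarrow> ('a \<Rightarrow> int) set \<Rightarrow> (('a \<Rightarrow> int) \<Rightarrow> int) \<Rightarrow> 'a
    \<Rightarrow> ('a \<Rightarrow> int) set \<Rightarrow> bool" where
  "single_ext E C \<sigma> p C' \<longleftrightarrow> p \<notin> E \<and> is_OM (insert p E) C' \<and> deletion C' p = C
      \<and> (\<forall>Y\<in>C. Y(p := \<sigma> Y) \<in> C')"

definition lex_ext :: "'a set \<Rightarrow> ('a \<Rightarrow> int) set \<Rightarrow> 'a list \<Rightarrow> 'a \<Rightarrow> ('a \<Rightarrow> int) set \<Rightarrow> bool" where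
  "lex_ext E C I p C' \<longleftrightarrow> single_ext E C (lex_sigma I) p C'"

end

theory Submission
  imports Defs
begin


lemma OM_fin: "is_OM E C \<Longrightarrow> finite E" by (simp add: is_OM_def)
lemma OM_sv: "is_OM E C \<Longrightarrow> W \<in> C \<Longrightarrow> W e = -1 \<or> W e = 0 \<or> W e = 1"
  unfolding is_OM_def sign_vector_def by blast
lemma OM_out: "is_OM E C \<Longrightarrow> W \<in> C \<Longrightarrow> e \<notin> E \<Longrightarrow> W e = 0"
  unfolding is_OM_def sign_vector_def by blast
lemma OM_neg: "is_OM E C \<Longrightarrow> W \<in> C \<Longrightarrow> neg W \<in> C"
  unfolding is_OM_def by blast
lemma OM_nz: "is_OM E C \<Longrightarrow> W \<in> C \<Longrightarrow> \<exists>e\<in>E. W e \<noteq> 0"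
proof (rule ccontr)
  assume a: "is_OM E C" "W \<in> C" "\<not> (\<exists>e\<in>E. W e \<noteq> 0)"
  then have "W = zerovec" unfolding zerovec_def using OM_out[OF a(1,2)] by fastforce
  moreover have "zerovec \<notin> C" using a(1) unfolding is_OM_def by (elim conjE)
  ultimately show False using a(2) by simp
qed
lemma OM_supp: "is_OM E C \<Longrightarrow> W1 \<in> C \<Longrightarrow> W2 \<in> C \<Longrightarrow> (\<And>e. W1 e \<noteq> 0 \<Longrightarrow> W2 e \<noteq> 0) \<Longrightarrow> W1 = W2 \<or> W1 = neg W2"
proof -
  assume a: "is_OM E C" "W1 \<in> C" "W2 \<in> C" "\<And>e. W1 e \<noteq> 0 \<Longrightarrow> W2 e \<noteq> 0"
  have "supp E W1 \<subseteq> supp E W2" unfolding supp_def using a(4) by blast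
  moreover have "\<forall>X\<in>C. \<forall>Y\<in>C. supp E X \<subseteq> supp E Y \<longrightarrow> X = Y \<or> X = neg Y"
    using a(1) unfolding is_OM_def by (elim conjE)
  ultimately show ?thesis using a(2,3) by blast
qed
lemma OM_elim_ax: "is_OM E C \<Longrightarrow> \<forall>X\<in>C. \<forall>Y\<in>C. \<forall>e. X \<noteq> neg Y \<and> e \<in> sep E X Y \<longrightarrow>
          (\<exists>Z\<in>C. Z e = 0 \<and> (\<forall>g. Z g > 0 \<longrightarrow> X g > 0 \<or> Y g > 0)
                          \<and> (\<forall>g. Z g < 0 \<longrightarrow> X g < 0 \<or> Y g < 0))"
  unfolding is_OM_def by (elim conjE)
lemma OM_elim: "is_OM E C \<Longrightarrow> W1 \<in> C \<Longrightarrow> W2 \<in> C \<Longrightarrow> W1 \<noteq> neg W2 \<Longrightarrow> W1 e = - W2 e \<Longrightarrow> W1 e \<noteq> 0 \<Longrightarrow>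
   \<exists>Z\<in>C. Z e = 0 \<and> (\<forall>g. Z g > 0 \<longrightarrow> W1 g > 0 \<or> W2 g > 0) \<and> (\<forall>g. Z g < 0 \<longrightarrow> W1 g < 0 \<or> W2 g < 0)"
proof -
  assume a: "is_OM E C" "W1 \<in> C" "W2 \<in> C" "W1 \<noteq> neg W2" "W1 e = - W2 e" "W1 e \<noteq> 0"
  have "e \<in> E" using OM_out[OF a(1) a(2), of e] a(6) by blast
  then have "e \<in> sep E W1 W2" using a(5,6) unfolding sep_def by simp
  then show ?thesis using OM_elim_ax[OF a(1)] a(2,3,4) by auto
qed
lemma neg_app[simp]: "neg W e = - W e" by (simp add: neg_def)
lemma neg_neg[simp]: "neg (neg W) = W" by (simp add: neg_def)

lemma SE_aux:
  assumes OM: "is_OM E C"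
  shows "\<forall>W1 W2 x b. W1 \<in> C \<longrightarrow> W2 \<in> C \<longrightarrow> card ({e. W1 e \<noteq> 0} \<union> {e. W2 e \<noteq> 0}) = n \<longrightarrow>
     W1 x \<noteq> 0 \<longrightarrow> W2 x \<noteq> 0 \<longrightarrow> W1 b \<noteq> 0 \<longrightarrow> W2 b = 0 \<longrightarrow>
     (\<exists>Z\<in>C. Z x = 0 \<and> Z b \<noteq> 0 \<and> {e. Z e \<noteq> 0} \<subseteq> {e. W1 e \<noteq> 0} \<union> {e. W2 e \<noteq> 0})"
proof (induction n rule: less_induct)
  case (less n)
  have fin: "\<And>W. W \<in> C \<Longrightarrow> finite {e. W e \<noteq> 0}"
  proof -
    fix W assume "W \<in> C"
    then have "{e. W e \<noteq> 0} \<subseteq> E" using OM_out[OF OM] by blast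
    then show "finite {e. W e \<noteq> 0}" using OM_fin[OF OM] finite_subset by blast
  qed
  show ?case
  proof (intro allI impI)
    fix W1 W2 x b
    assume W1: "W1 \<in> C" and W2: "W2 \<in> C" and n: "card ({e. W1 e \<noteq> 0} \<union> {e. W2 e \<noteq> 0}) = n"
      and x1: "W1 x \<noteq> 0" and x2: "W2 x \<noteq> 0" and b1: "W1 b \<noteq> 0" and b2: "W2 b = 0"
    define W2' where "W2' = (if W1 x = - W2 x then W2 else neg W2)"
    have W2'C: "W2' \<in> C" using W2 OM_neg[OF OM] by (simp add: W2'_def)
    have x2': "W1 x = - W2' x" using OM_sv[OF OM W1, of x] OM_sv[OF OM W2, of x] x1 x2
      by (auto simp: W2'_def)
    have ne: "W1 \<noteq> neg W2'" using b1 b2 by (auto simp: W2'_def)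
    have supp2': "\<And>g. W2' g \<noteq> 0 \<longleftrightarrow> W2 g \<noteq> 0" by (simp add: W2'_def)
    obtain Z3 where Z3: "Z3 \<in> C" "Z3 x = 0" "\<forall>g. Z3 g > 0 \<longrightarrow> W1 g > 0 \<or> W2' g > 0"
      "\<forall>g. Z3 g < 0 \<longrightarrow> W1 g < 0 \<or> W2' g < 0"
      using OM_elim[OF OM W1 W2'C ne x2' x1] by blast
    have Z3s: "\<And>g. Z3 g \<noteq> 0 \<Longrightarrow> W1 g \<noteq> 0 \<or> W2 g \<noteq> 0"
    proof -
      fix g assume "Z3 g \<noteq> 0"
      then have "Z3 g > 0 \<or> Z3 g < 0" by linarith
      then have "W1 g \<noteq> 0 \<or> W2' g \<noteq> 0" using Z3(3,4) by fastforce
      then show "W1 g \<noteq> 0 \<or> W2 g \<noteq> 0" using supp2' by blast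
    qed
    show "\<exists>Z\<in>C. Z x = 0 \<and> Z b \<noteq> 0 \<and> {e. Z e \<noteq> 0} \<subseteq> {e. W1 e \<noteq> 0} \<union> {e. W2 e \<noteq> 0}"
    proof (cases "Z3 b \<noteq> 0")
      case True then show ?thesis using Z3 Z3s by blast
    next
      case False
      obtain g where g: "Z3 g \<noteq> 0" "W1 g = 0"
      proof (rule ccontr)
        assume "\<not> thesis"
        then have "\<And>g. Z3 g \<noteq> 0 \<Longrightarrow> W1 g \<noteq> 0" using that by blast
        then have "Z3 = W1 \<or> Z3 = neg W1" using OM_supp[OF OM Z3(1) W1] by blast
        then show False using Z3(2) x1 by auto
      qed
      have g2: "W2 g \<noteq> 0" using g Z3s by blast
      have sub1: "{e. W2 e \<noteq> 0} \<union> {e. Z3 e \<noteq> 0} \<subset> {e. W1 e \<noteq> 0} \<union> {e. W2 e \<noteq> 0}"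
        using Z3s b1 b2 False by auto
      have c1: "card ({e. W2 e \<noteq> 0} \<union> {e. Z3 e \<noteq> 0}) < n"
        using psubset_card_mono[OF _ sub1] fin W1 W2 n by blast
      obtain Z4 where Z4: "Z4 \<in> C" "Z4 g = 0" "Z4 x \<noteq> 0"
        "{e. Z4 e \<noteq> 0} \<subseteq> {e. W2 e \<noteq> 0} \<union> {e. Z3 e \<noteq> 0}"
        using less.IH[OF c1] W2 Z3(1,2) g2 g(1) x2 by blast
      have b4: "Z4 b = 0" using Z4(4) b2 False by blast
      have sub2: "{e. W1 e \<noteq> 0} \<union> {e. Z4 e \<noteq> 0} \<subset> {e. W1 e \<noteq> 0} \<union> {e. W2 e \<noteq> 0}"
        using Z4(2,4) Z3s g g2 by auto
      have c2: "card ({e. W1 e \<noteq> 0} \<union> {e. Z4 e \<noteq> 0}) < n"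
        using psubset_card_mono[OF _ sub2] fin W1 W2 n by blast
      obtain Z5 where Z5: "Z5 \<in> C" "Z5 x = 0" "Z5 b \<noteq> 0"
        "{e. Z5 e \<noteq> 0} \<subseteq> {e. W1 e \<noteq> 0} \<union> {e. Z4 e \<noteq> 0}"
        using less.IH[OF c2] W1 Z4(1,3) x1 b1 b4 by blast
      show ?thesis using Z5 Z4(4) Z3s by blast
    qed
  qed
qed

lemma SE:
  assumes "is_OM E C" "W1 \<in> C" "W2 \<in> C" "W1 x \<noteq> 0" "W2 x \<noteq> 0" "W1 b \<noteq> 0" "W2 b = 0"
  shows "\<exists>Z\<in>C. Z x = 0 \<and> Z b \<noteq> 0 \<and> {e. Z e \<noteq> 0} \<subseteq> {e. W1 e \<noteq> 0} \<union> {e. W2 e \<noteq> 0}"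
  using SE_aux[OF assms(1)] assms(2-) by blast




lemma cl_iff: "e \<in> om_cl E C A \<longleftrightarrow> e \<in> E \<and> (\<forall>W\<in>C. A \<subseteq> zset E W \<longrightarrow> e \<in> zset E W)"
  by (simp add: om_cl_def)
lemma zset_iff: "e \<in> zset E W \<longleftrightarrow> e \<in> E \<and> W e = 0" by (simp add: zset_def)
lemma sub_zset: "A \<subseteq> E \<Longrightarrow> A \<subseteq> zset E W \<longleftrightarrow> (\<forall>b\<in>A. W b = 0)"
  by (auto simp: zset_def)

lemma cl_sub: "om_cl E C A \<subseteq> E" by (auto simp: om_cl_def)
lemma cl_incl: "A \<subseteq> E \<Longrightarrow> A \<subseteq> om_cl E C A" by (auto simp: om_cl_def)
lemma cl_mono: "A \<subseteq> B \<Longrightarrow> om_cl E C A \<subseteq> om_cl E C B" by (auto simp: om_cl_def)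
lemma cl_trans: "D \<subseteq> om_cl E C A \<Longrightarrow> om_cl E C D \<subseteq> om_cl E C A"
  unfolding om_cl_def by blast
lemma notin_cl: "W \<in> C \<Longrightarrow> \<forall>b\<in>A. W b = 0 \<Longrightarrow> A \<subseteq> E \<Longrightarrow> W x \<noteq> 0 \<Longrightarrow> x \<notin> om_cl E C A"
  unfolding om_cl_def zset_def by blast
lemma notin_cl_D: "x \<in> E \<Longrightarrow> x \<notin> om_cl E C A \<Longrightarrow> A \<subseteq> E \<Longrightarrow> \<exists>W\<in>C. (\<forall>b\<in>A. W b = 0) \<and> W x \<noteq> 0"
  unfolding om_cl_def zset_def by blast

lemma indep_sub: "om_indep E C A \<Longrightarrow> A' \<subseteq> A \<Longrightarrow> om_indep E C A'"
  unfolding om_indep_def using cl_mono[of "A' - {_}" "A - {_}" E C] by blast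

lemma indep_empty: "om_indep E C {}" by (simp add: om_indep_def)

lemma EXT:
  assumes OM: "is_OM E C" and B: "om_indep E C B" and W: "W \<in> C" "\<forall>b\<in>B. W b = 0"
    and x: "x \<in> E" "W x \<noteq> 0"
  shows "om_indep E C (insert x B) \<and> x \<notin> B"
proof -
  have BE: "B \<subseteq> E" using B by (simp add: om_indep_def)
  have xB: "x \<notin> B" using W x by blast
  have "\<forall>a\<in>insert x B. a \<notin> om_cl E C (insert x B - {a})"
  proof
    fix a assume a: "a \<in> insert x B"
    show "a \<notin> om_cl E C (insert x B - {a})"
    proof (cases "a = x")
      case True
      then have "insert x B - {a} = B" using xB by auto
      then show ?thesis using notin_cl[OF W BE x(2)] True by simp
    next
      case False
      then have aB: "a \<in> B" using a by simp
      have eq: "insert x B - {a} = insert x (B - {a})" using False by auto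
      have "a \<notin> om_cl E C (B - {a})" using B aB by (simp add: om_indep_def)
      then obtain W1 where W1: "W1 \<in> C" "\<forall>b\<in>B - {a}. W1 b = 0" "W1 a \<noteq> 0"
        using notin_cl_D[of a E C "B - {a}"] aB BE by blast
      show ?thesis
      proof (cases "W1 x = 0")
        case True
        have "\<forall>b\<in>insert x (B - {a}). W1 b = 0" using True W1(2) by blast
        then show ?thesis unfolding eq
          by (rule notin_cl[OF W1(1) _ _ W1(3)]) (use BE x(1) in auto)
      next
        case False
        obtain Z where Z: "Z \<in> C" "Z x = 0" "Z a \<noteq> 0" "{e. Z e \<noteq> 0} \<subseteq> {e. W1 e \<noteq> 0} \<union> {e. W e \<noteq> 0}"
          using SE[OF OM W1(1) W(1) False x(2) W1(3)] W(2) aB by blast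
        have "\<forall>b\<in>insert x (B - {a}). Z b = 0" using Z(2,4) W1(2) W(2) by blast
        then show ?thesis unfolding eq
          by (rule notin_cl[OF Z(1) _ _ Z(3)]) (use BE x(1) in auto)
      qed
    qed
  qed
  then show ?thesis using xB BE x(1) by (simp add: om_indep_def)
qed

lemma steinitz_aux:
  assumes OM: "is_OM E C" and D: "finite D" "D \<subseteq> E"
  shows "\<forall>A. om_indep E C A \<longrightarrow> A \<subseteq> om_cl E C D \<longrightarrow> card (A - D) = n \<longrightarrow> card A \<le> card D"
proof (induction n)
  case 0
  show ?case
  proof (intro allI impI)
    fix A assume A: "om_indep E C A" "A \<subseteq> om_cl E C D" "card (A - D) = 0"
    have fA: "finite A" using A(1) OM_fin[OF OM] finite_subset by (auto simp: om_indep_def)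
    then have "A \<subseteq> D" using A(3) by auto
    then show "card A \<le> card D" using D(1) card_mono by blast
  qed
next
  case (Suc n)
  show ?case
  proof (intro allI impI)
    fix A assume A: "om_indep E C A" "A \<subseteq> om_cl E C D" "card (A - D) = Suc n"
    have AE: "A \<subseteq> E" using A(1) by (simp add: om_indep_def)
    have fA: "finite A" using AE OM_fin[OF OM] finite_subset by auto
    obtain a where a: "a \<in> A" "a \<notin> D" proof -
      have "A - D \<noteq> {}" using A(3) by (metis card.empty nat.distinct(1))
      then show ?thesis using that by blast
    qed
    have acl: "a \<notin> om_cl E C (A - {a})" using A(1) a(1) by (simp add: om_indep_def)
    obtain c where c: "c \<in> D" "c \<notin> om_cl E C (A - {a})"
    proof (rule ccontr)
      assume "\<not> thesis"
      then have "D \<subseteq> om_cl E C (A - {a})" using that by blast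
      then have "om_cl E C D \<subseteq> om_cl E C (A - {a})" by (rule cl_trans)
      then show False using A(2) a(1) acl by blast
    qed
    have cA: "c \<notin> A" using c a(2) cl_incl[of "A - {a}" E C] AE by blast
    obtain W where W: "W \<in> C" "\<forall>b\<in>A - {a}. W b = 0" "W c \<noteq> 0"
      using notin_cl_D[of c E C "A - {a}"] c D(2) AE by blast
    have ind: "om_indep E C (insert c (A - {a}))"
      using EXT[OF OM indep_sub[OF A(1)] W(1,2) _ W(3)] c(1) D(2) by blast
    have sub: "insert c (A - {a}) \<subseteq> om_cl E C D"
      using A(2) c(1) cl_incl[OF D(2), of C] by blast
    have "insert c (A - {a}) - D = (A - D) - {a}" using c(1) a by auto
    then have cd: "card (insert c (A - {a}) - D) = n" using A(3) a fA by simp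
    have "card (insert c (A - {a})) = card A" using cA a(1) fA
      by (simp add: card_Suc_Diff1 card_gt_0_iff) (metis Suc_pred card_gt_0_iff empty_iff)
    then show "card A \<le> card D" using Suc.IH ind sub cd by metis
  qed
qed

lemma steinitz:
  assumes "is_OM E C" "finite D" "D \<subseteq> E" "om_indep E C A" "A \<subseteq> om_cl E C D"
  shows "card A \<le> card D"
  using steinitz_aux[OF assms(1-3)] assms(4,5) by blast

lemma rank_ge:
  assumes "finite S" "A \<subseteq> S" "om_indep E C A"
  shows "card A \<le> om_rank_of E C S"
proof -
  have "finite {card B | B. B \<subseteq> S \<and> om_indep E C B}"
  proof -
    have "{card B | B. B \<subseteq> S \<and> om_indep E C B} \<subseteq> card ` Pow S" by auto
    then show ?thesis using assms(1) finite_subset by blast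
  qed
  then show ?thesis unfolding om_rank_of_def using assms by (auto intro: Max_ge)
qed

lemma rank_obtain:
  assumes "finite S"
  obtains B where "B \<subseteq> S" "om_indep E C B" "card B = om_rank_of E C S"
proof -
  let ?M = "{card B | B. B \<subseteq> S \<and> om_indep E C B}"
  have fin: "finite ?M"
  proof -
    have "?M \<subseteq> card ` Pow S" by auto
    then show ?thesis using assms(1) finite_subset by blast
  qed
  have ne: "?M \<noteq> {}" using indep_empty[of E C] by auto
  have "Max ?M \<in> ?M" using Max_in[OF fin ne] .
  then show ?thesis using that unfolding om_rank_of_def by auto
qed




lemma sgn_det: "(a::int) \<in> {-1,0,1} \<Longrightarrow> b \<in> {-1,0,1} \<Longrightarrow> (a > 0 \<longrightarrow> b > 0) \<Longrightarrow> (a < 0 \<longrightarrow> b < 0) \<Longrightarrow> a \<noteq> 0 \<Longrightarrow> a = b"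
  by auto

lemma comp_app: "comp X Y e = (if X e \<noteq> 0 then X e else Y e)" by (simp add: comp_def)

context
  fixes E :: "'a set" and C :: "('a \<Rightarrow> int) set" and X Y :: "'a \<Rightarrow> int" and q :: 'a
  assumes OM: "is_OM E C" and XC: "X \<in> C" and YC: "Y \<in> C"
    and conf: "conformal E X Y"
    and edge: "int (om_rank_of E C (zset E (comp X Y))) = int (om_rank E C) - 2"
    and q: "X q = Y q" "X q \<noteq> 0"
begin

lemma F_iff: "e \<in> zset E (comp X Y) \<longleftrightarrow> e \<in> E \<and> X e = 0 \<and> Y e = 0"
  by (auto simp: zset_def comp_def)

lemma sv: "W \<in> C \<Longrightarrow> W e \<in> {-1,0,1}" using OM_sv[OF OM] by auto

lemma conf_eq: "X e \<noteq> 0 \<Longrightarrow> Y e \<noteq> 0 \<Longrightarrow> X e = Y e"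
proof -
  assume a: "X e \<noteq> 0" "Y e \<noteq> 0"
  have "e \<in> E" using OM_out[OF OM XC] a by blast
  then have "\<not> (X e = - Y e \<and> X e \<noteq> 0)" using conf unfolding conformal_def sep_def by blast
  then show ?thesis using a sv[OF XC, of e] sv[OF YC, of e] by auto
qed

lemma U:
  assumes T: "T = X \<or> T = Y" "T g \<noteq> 0" "g \<in> E"
    and W1: "W1 \<in> C" "\<forall>e\<in>insert g (zset E (comp X Y)). W1 e = 0"
    and W2: "W2 \<in> C" "\<forall>e\<in>insert g (zset E (comp X Y)). W2 e = 0"
  shows "W1 = W2 \<or> W1 = neg W2"
proof (rule ccontr)
  assume ne: "\<not> (W1 = W2 \<or> W1 = neg W2)"
  let ?F = "zset E (comp X Y)"
  obtain g2 where g2: "W1 g2 \<noteq> 0" "W2 g2 = 0"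
    using OM_supp[OF OM W1(1) W2(1)] ne by blast
  have g2E: "g2 \<in> E" using OM_out[OF OM W1(1)] g2 by blast
  obtain g3 where g3: "g3 \<in> E" "W2 g3 \<noteq> 0" using OM_nz[OF OM W2(1)] by blast
  have TC: "T \<in> C" using T XC YC by blast
  have FE: "?F \<subseteq> E" by (auto simp: zset_def)
  have finE: "finite E" using OM_fin[OF OM] .
  then have finF: "finite ?F" using FE finite_subset by blast
  obtain B where B: "B \<subseteq> ?F" "om_indep E C B" "card B = om_rank_of E C ?F"
    using rank_obtain[OF finF] by blast
  have TF: "\<forall>b\<in>B. T b = 0" using B(1) T(1) F_iff by blast
  have B1: "om_indep E C (insert g B)" "g \<notin> B" using EXT[OF OM B(2) TC TF T(3) T(2)] by auto
  have B2: "om_indep E C (insert g2 (insert g B))" "g2 \<notin> insert g B"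
    using EXT[OF OM B1(1) W1(1) _ g2E g2(1)] W1(2) B(1) by auto
  have B3: "om_indep E C (insert g3 (insert g2 (insert g B)))" "g3 \<notin> insert g2 (insert g B)"
    using EXT[OF OM B2(1) W2(1) _ g3(1) g3(2)] W2(2) B(1) g2(2) by auto
  have finB: "finite B" using B(1) finF finite_subset by blast
  have card3: "card (insert g3 (insert g2 (insert g B))) = card B + 3"
    using B1(2) B2(2) B3(2) finB by simp
  have "insert g3 (insert g2 (insert g B)) \<subseteq> E" using B3(1) by (simp add: om_indep_def)
  then have "card (insert g3 (insert g2 (insert g B))) \<le> om_rank E C"
    using rank_ge[OF finE _ B3(1)] by (simp add: om_rank_def)
  then show False using card3 B(3) edge by linarith
qed

lemma XneY: "X \<noteq> Y"
proof
  assume XY: "X = Y"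
  have cXX: "comp X Y = X" unfolding XY comp_def by auto
  let ?F = "zset E X"
  have FE: "?F \<subseteq> E" by (auto simp: zset_def)
  have finE: "finite E" using OM_fin[OF OM] .
  then have finF: "finite ?F" using FE finite_subset by blast
  obtain B where B: "B \<subseteq> ?F" "om_indep E C B" "card B = om_rank_of E C ?F"
    using rank_obtain[OF finF] by blast
  have BE: "B \<subseteq> E" using B(1) FE by blast
  have finB: "finite B" using B(1) finF finite_subset by blast
  obtain x where x: "x \<in> E" "X x \<noteq> 0" using OM_nz[OF OM XC] by blast
  have xB: "x \<notin> B" using B(1) x by (auto simp: zset_def)
  have Fcl: "?F \<subseteq> om_cl E C B"
  proof
    fix y assume y: "y \<in> ?F"
    show "y \<in> om_cl E C B"
    proof (rule ccontr)
      assume "y \<notin> om_cl E C B"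
      then obtain W where W: "W \<in> C" "\<forall>b\<in>B. W b = 0" "W y \<noteq> 0"
        using notin_cl_D[of y E C B] y BE FE by blast
      have "om_indep E C (insert y B)" "y \<notin> B" using EXT[OF OM B(2) W(1,2) _ W(3)] y FE by auto
      moreover have "insert y B \<subseteq> ?F" using y B(1) by blast
      ultimately have "card (insert y B) \<le> om_rank_of E C ?F" using rank_ge[OF finF] by blast
      then show False using B(3) finB \<open>y \<notin> B\<close> by simp
    qed
  qed
  let ?D = "insert x B"
  have Dcl: "E \<subseteq> om_cl E C ?D"
  proof
    fix e assume e: "e \<in> E"
    have "\<not> (\<exists>W\<in>C. ?D \<subseteq> zset E W)"
    proof
      assume "\<exists>W\<in>C. ?D \<subseteq> zset E W"
      then obtain W where W: "W \<in> C" "?D \<subseteq> zset E W" by blast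
      have "om_cl E C B \<subseteq> zset E W" using W unfolding om_cl_def by blast
      then have "?F \<subseteq> zset E W" using Fcl by blast
      then have "\<And>e. W e \<noteq> 0 \<Longrightarrow> X e \<noteq> 0"
        using OM_out[OF OM W(1)] by (auto simp: zset_def)
      then have "W = X \<or> W = neg X" using OM_supp[OF OM W(1) XC] by blast
      moreover have "W x = 0" using W(2) by (auto simp: zset_def)
      ultimately show False using x by auto
    qed
    then show "e \<in> om_cl E C ?D" using e by (auto simp: om_cl_def)
  qed
  obtain A where A: "A \<subseteq> E" "om_indep E C A" "card A = om_rank_of E C E"
    using rank_obtain[OF finE] by blast
  have "card A \<le> card ?D" using steinitz[OF OM _ _ A(2)] Dcl A(1) finB BE x(1) by blast
  then have "card A \<le> card B + 1" using finB xB by simp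
  then show False using A(3) B(3) edge cXX by (simp add: om_rank_def)
qed

lemma XnenegY: "X \<noteq> neg Y"
proof
  assume "X = neg Y"
  then have "X q = - Y q" by simp
  then show False using q by simp
qed

lemma k_exists: "\<exists>k\<in>E. (X k \<noteq> 0 \<and> Y k = 0) \<or> (X k = 0 \<and> Y k \<noteq> 0)"
proof (rule ccontr)
  assume "\<not> ?thesis"
  then have "\<And>e. X e \<noteq> 0 \<Longrightarrow> Y e \<noteq> 0" using OM_out[OF OM XC] by blast
  then show False using OM_supp[OF OM XC YC] XneY XnenegY by blast
qed

definition Mp where
  "Mp g Z \<longleftrightarrow> Z \<in> C \<and> Z g = 0 \<and> (\<forall>h\<in>E. h \<notin> sep E (neg X) Y \<longrightarrow> Z h = comp (neg X) Y h)"

lemma sepnX: "h \<in> sep E (neg X) Y \<longleftrightarrow> h \<in> E \<and> X h = Y h \<and> X h \<noteq> 0"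
  by (auto simp: sep_def)

lemma Mp_off: "Mp g Z \<Longrightarrow> h \<in> E \<Longrightarrow> \<not> (X h = Y h \<and> X h \<noteq> 0) \<Longrightarrow> Z h = (if X h \<noteq> 0 then - X h else Y h)"
  unfolding Mp_def sepnX by (auto simp: comp_def)

lemma Mp_F: "Mp g Z \<Longrightarrow> e \<in> zset E (comp X Y) \<Longrightarrow> Z e = 0"
  using Mp_off[of g Z e] F_iff by auto

lemma M_exists:
  assumes g: "g \<in> E" "X g = Y g" "X g \<noteq> 0"
  shows "\<exists>Z. Mp g Z"
proof -
  have nXC: "neg X \<in> C" using OM_neg[OF OM XC] .
  have ne: "neg X \<noteq> neg Y" using XneY by (metis neg_neg)
  obtain Z where Z: "Z \<in> C" "Z g = 0" "\<forall>h. Z h > 0 \<longrightarrow> neg X h > 0 \<or> Y h > 0"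
     "\<forall>h. Z h < 0 \<longrightarrow> neg X h < 0 \<or> Y h < 0"
    using OM_elim[OF OM nXC YC ne, of g] g by auto
  have Zs: "\<And>h. Z h \<noteq> 0 \<Longrightarrow> X h \<noteq> 0 \<or> Y h \<noteq> 0"
  proof -
    fix h assume "Z h \<noteq> 0"
    then have "Z h > 0 \<or> Z h < 0" by linarith
    then show "X h \<noteq> 0 \<or> Y h \<noteq> 0" using Z(3,4) by force
  qed
  have ZF: "\<forall>e\<in>zset E (comp X Y). Z e = 0" using Zs F_iff by blast
  have "\<forall>h\<in>E. h \<notin> sep E (neg X) Y \<longrightarrow> Z h = comp (neg X) Y h"
  proof (intro ballI impI)
    fix h assume h: "h \<in> E" "h \<notin> sep E (neg X) Y"
    then have hS: "\<not> (X h = Y h \<and> X h \<noteq> 0)" using sepnX by blast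
    consider "X h = 0 \<and> Y h = 0" | "X h \<noteq> 0 \<and> Y h = 0" | "X h = 0 \<and> Y h \<noteq> 0"
      using hS conf_eq by blast
    then show "Z h = comp (neg X) Y h"
    proof cases
      case 1 then show ?thesis using Zs by (auto simp: comp_def)
    next
      case 2
      have Zh: "Z h \<noteq> 0"
      proof
        assume "Z h = 0"
        then have "Z = Y \<or> Z = neg Y"
          using U[of X h Z Y] 2 h(1) Z(1) YC ZF F_iff by auto
        then show False using Z(2) g by auto
      qed
      have "Z h = - X h" using sgn_det[OF sv[OF Z(1)] _ _ _ Zh, of "- X h"] sv[OF XC, of h] Z(3)[rule_format, of h] Z(4)[rule_format, of h] 2
        by auto
      then show ?thesis using 2 by (simp add: comp_def)
    next
      case 3
      have Zh: "Z h \<noteq> 0"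
      proof
        assume "Z h = 0"
        then have "Z = X \<or> Z = neg X"
          using U[of Y h Z X] 3 h(1) Z(1) XC ZF F_iff by auto
        then show False using Z(2) g by auto
      qed
      have "Z h = Y h" using sgn_det[OF sv[OF Z(1)] sv[OF YC] _ _ Zh] Z(3)[rule_format, of h] Z(4)[rule_format, of h] 3
        by auto
      then show ?thesis using 3 by (simp add: comp_def)
    qed
  qed
  then show ?thesis using Z(1,2) unfolding Mp_def by blast
qed

lemma M_unique:
  assumes g: "g \<in> E" "X g \<noteq> 0" and Z1: "Mp g Z1" and Z2: "Mp g Z2"
  shows "Z1 = Z2"
proof -
  have C1: "Z1 \<in> C" "Z1 g = 0" using Z1 by (auto simp: Mp_def)
  have C2: "Z2 \<in> C" "Z2 g = 0" using Z2 by (auto simp: Mp_def)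
  have "Z1 = Z2 \<or> Z1 = neg Z2"
    using U[of X g Z1 Z2] g C1 C2 Mp_F[OF Z1] Mp_F[OF Z2] by auto
  moreover have "Z1 \<noteq> neg Z2"
  proof
    assume n: "Z1 = neg Z2"
    obtain k where k: "k \<in> E" "(X k \<noteq> 0 \<and> Y k = 0) \<or> (X k = 0 \<and> Y k \<noteq> 0)" using k_exists by blast
    have "\<not> (X k = Y k \<and> X k \<noteq> 0)" using k by auto
    then have "Z1 k = Z2 k" "Z1 k \<noteq> 0" using Mp_off[OF Z1 k(1)] Mp_off[OF Z2 k(1)] k by auto
    then show False using n by simp
  qed
  ultimately show ?thesis by blast
qed

lemma elim_eq:
  assumes g: "g \<in> E" "X g \<noteq> 0" and Z: "Mp g Z"
  shows "elim E C (neg X) Y g = Z"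
  unfolding elim_def
proof (rule the_equality)
  show "Z \<in> C \<and> Z g = 0 \<and> (\<forall>h\<in>E. h \<notin> sep E (neg X) Y \<longrightarrow> Z h = comp (neg X) Y h)"
    using Z by (simp add: Mp_def)
next
  fix Z' assume "Z' \<in> C \<and> Z' g = 0 \<and> (\<forall>h\<in>E. h \<notin> sep E (neg X) Y \<longrightarrow> Z' h = comp (neg X) Y h)"
  then have "Mp g Z'" by (simp add: Mp_def)
  then show "Z' = Z" using M_unique[OF g _ Z] by blast
qed


lemma Mp_C: "Mp g Z \<Longrightarrow> Z \<in> C" by (simp add: Mp_def)
lemma Mp_g: "Mp g Z \<Longrightarrow> Z g = 0" by (simp add: Mp_def)

lemma claim1:
  assumes g: "g \<in> E" "X g = Y g" "X g \<noteq> 0" and h: "h \<in> E" "X h = Y h" "X h \<noteq> 0"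
    and Z1: "Mp g Z1" and Z2: "Mp h Z2" and c: "Z1 h = X h" "Z2 g = X g"
  shows False
proof -
  have nXC: "neg X \<in> C" using OM_neg[OF OM XC] .
  have Z2C: "Z2 \<in> C" using Mp_C[OF Z2] .
  have ne: "neg X \<noteq> neg Z2"
  proof
    assume "neg X = neg Z2"
    then have "X = Z2" by (metis neg_neg)
    then show False using Mp_g[OF Z2] h by simp
  qed
  obtain W where W: "W \<in> C" "W g = 0" "\<forall>e. W e > 0 \<longrightarrow> neg X e > 0 \<or> Z2 e > 0"
     "\<forall>e. W e < 0 \<longrightarrow> neg X e < 0 \<or> Z2 e < 0"
    using OM_elim[OF OM nXC Z2C ne, of g] g c by auto
  have WF: "\<forall>e\<in>insert g (zset E (comp X Y)). W e = 0"
  proof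
    fix e assume e: "e \<in> insert g (zset E (comp X Y))"
    show "W e = 0"
    proof (cases "e = g")
      case True then show ?thesis using W(2) by simp
    next
      case False
      then have "X e = 0" "Z2 e = 0" using e F_iff Mp_F[OF Z2] by auto
      then show ?thesis using W(3)[rule_format, of e] W(4)[rule_format, of e] by force
    qed
  qed
  have Z1F: "\<forall>e\<in>insert g (zset E (comp X Y)). Z1 e = 0" using Mp_F[OF Z1] Mp_g[OF Z1] by blast
  have "W = Z1 \<or> W = neg Z1" using U[of X g W Z1] g W(1) Mp_C[OF Z1] WF Z1F by auto
  moreover have "W \<noteq> Z1"
  proof
    assume "W = Z1"
    then have "W h = X h" using c by simp
    then show False using W(3)[rule_format, of h] W(4)[rule_format, of h] Mp_g[OF Z2] h(3)
      by (cases "X h > 0") auto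
  qed
  ultimately have WZ: "W = neg Z1" by blast
  obtain k where k: "k \<in> E" "(X k \<noteq> 0 \<and> Y k = 0) \<or> (X k = 0 \<and> Y k \<noteq> 0)" using k_exists by blast
  have kS: "\<not> (X k = Y k \<and> X k \<noteq> 0)" using k by auto
  have o1: "Z1 k = (if X k \<noteq> 0 then - X k else Y k)" using Mp_off[OF Z1 k(1) kS] .
  have o2: "Z2 k = (if X k \<noteq> 0 then - X k else Y k)" using Mp_off[OF Z2 k(1) kS] .
  have "W k = - Z1 k" using WZ by simp
  then have Wk: "W k = - (if X k \<noteq> 0 then - X k else Y k)" using o1 by simp
  have w3: "W k > 0 \<Longrightarrow> neg X k > 0 \<or> Z2 k > 0" and w4: "W k < 0 \<Longrightarrow> neg X k < 0 \<or> Z2 k < 0"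
    using W(3)[rule_format, of k] W(4)[rule_format, of k] by auto
  show False
  proof (cases "X k \<noteq> 0")
    case True
    then have "Y k = 0" using k(2) by blast
    then have "W k = X k" "Z2 k = - X k" "neg X k = - X k" using True Wk o2 by auto
    then show False using w3 w4 True by (cases "X k > 0") auto
  next
    case False
    then have "Y k \<noteq> 0" using k(2) by blast
    then have "W k = - Y k" "Z2 k = Y k" "neg X k = 0" using False Wk o2 by auto
    then show False using w3 w4 \<open>Y k \<noteq> 0\<close> by (cases "Y k > 0") auto
  qed
qed

lemma claim2:
  assumes g: "g \<in> E" "X g = Y g" "X g \<noteq> 0" and h: "h \<in> E" "X h = Y h" "X h \<noteq> 0"
    and Z1: "Mp g Z1" and Z2: "Mp h Z2" and c: "Z1 h = - X h" "Z2 g = - X g"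
  shows False
proof -
  have Z2C: "Z2 \<in> C" using Mp_C[OF Z2] .
  have ne: "Y \<noteq> neg Z2"
  proof
    assume "Y = neg Z2"
    then have "Y h = - Z2 h" by simp
    then show False using Mp_g[OF Z2] h by simp
  qed
  obtain W where W: "W \<in> C" "W g = 0" "\<forall>e. W e > 0 \<longrightarrow> Y e > 0 \<or> Z2 e > 0"
     "\<forall>e. W e < 0 \<longrightarrow> Y e < 0 \<or> Z2 e < 0"
    using OM_elim[OF OM YC Z2C ne, of g] g c by auto
  have WF: "\<forall>e\<in>insert g (zset E (comp X Y)). W e = 0"
  proof
    fix e assume e: "e \<in> insert g (zset E (comp X Y))"
    show "W e = 0"
    proof (cases "e = g")
      case True then show ?thesis using W(2) by simp
    next
      case False
      then have "Y e = 0" "Z2 e = 0" using e F_iff Mp_F[OF Z2] by auto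
      then show ?thesis using W(3)[rule_format, of e] W(4)[rule_format, of e] by force
    qed
  qed
  have Z1F: "\<forall>e\<in>insert g (zset E (comp X Y)). Z1 e = 0" using Mp_F[OF Z1] Mp_g[OF Z1] by blast
  have "W = Z1 \<or> W = neg Z1" using U[of X g W Z1] g W(1) Mp_C[OF Z1] WF Z1F by auto
  moreover have "W \<noteq> Z1"
  proof
    assume "W = Z1"
    then have "W h = - X h" using c by simp
    then show False using W(3)[rule_format, of h] W(4)[rule_format, of h] Mp_g[OF Z2] h
      by (cases "X h > 0") auto
  qed
  ultimately have WZ: "W = neg Z1" by blast
  obtain k where k: "k \<in> E" "(X k \<noteq> 0 \<and> Y k = 0) \<or> (X k = 0 \<and> Y k \<noteq> 0)" using k_exists by blast
  have kS: "\<not> (X k = Y k \<and> X k \<noteq> 0)" using k by auto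
  have o1: "Z1 k = (if X k \<noteq> 0 then - X k else Y k)" using Mp_off[OF Z1 k(1) kS] .
  have o2: "Z2 k = (if X k \<noteq> 0 then - X k else Y k)" using Mp_off[OF Z2 k(1) kS] .
  have "W k = - Z1 k" using WZ by simp
  then have Wk: "W k = - (if X k \<noteq> 0 then - X k else Y k)" using o1 by simp
  have w3: "W k > 0 \<Longrightarrow> Y k > 0 \<or> Z2 k > 0" and w4: "W k < 0 \<Longrightarrow> Y k < 0 \<or> Z2 k < 0"
    using W(3)[rule_format, of k] W(4)[rule_format, of k] by auto
  show False
  proof (cases "X k \<noteq> 0")
    case True
    then have "Y k = 0" using k(2) by blast
    then have "W k = X k" "Z2 k = - X k" "Y k = 0" using True Wk o2 by auto
    then show False using w3 w4 True by (cases "X k > 0") auto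
  next
    case False
    then have "Y k \<noteq> 0" using k(2) by blast
    then have "W k = - Y k" "Z2 k = Y k" "Y k = Y k" using False Wk o2 by auto
    then show False using w3 w4 \<open>Y k \<noteq> 0\<close> by (cases "Y k > 0") auto
  qed
qed

lemma core:
  assumes a: "a \<in> E" "X a = Y a" "X a \<noteq> 0" and p: "p \<in> E" "X p = Y p" "X p \<noteq> 0"
    and f: "f \<in> E" "X f = Y f" "X f \<noteq> 0"
    and Xap: "X a = X p"
    and lexprop: "\<And>Z. Mp f Z \<Longrightarrow> Z a \<noteq> 0 \<Longrightarrow> Z p \<noteq> 0 \<Longrightarrow> Z p = Z a"
    and Dprop: "\<And>Z. Mp p Z \<Longrightarrow> Z f = 0 \<Longrightarrow> Z a \<noteq> 0 \<Longrightarrow> False"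
    and Za: "Mp a Za" and Zaf: "Za f \<noteq> 0" and Zp: "Mp p Zp" and Zf: "Mp f Zf"
  shows "Zp f = Za f \<and> Zf a = Zf p"
proof -
  have Mp_change: "\<And>g g' Z. Mp g Z \<Longrightarrow> Z g' = 0 \<Longrightarrow> Mp g' Z" by (simp add: Mp_def)
  have 1: "Zf a \<noteq> 0"
  proof
    assume "Zf a = 0"
    then have "Zf = Za" using M_unique[OF a(1,3) Mp_change[OF Zf] Za] by blast
    then show False using Zaf Mp_g[OF Zf] by simp
  qed
  have 2: "Zf p \<noteq> 0"
  proof
    assume "Zf p = 0"
    then have "Zf = Zp" using M_unique[OF p(1,3) Mp_change[OF Zf] Zp] by blast
    then show False using Dprop[OF Zp] Mp_g[OF Zf] 1 by simp
  qed
  have 3: "Zf p = Zf a" using lexprop[OF Zf 1 2] .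
  have 4: "Zp f \<noteq> 0"
  proof
    assume "Zp f = 0"
    then have "Zp = Zf" using M_unique[OF f(1,3) Mp_change[OF Zp] Zf] by blast
    then show False using 2 Mp_g[OF Zp] by simp
  qed
  have s1: "\<not> (Za f = X f \<and> Zf a = X a)" using claim1[OF a f Za Zf] by blast
  have s2: "\<not> (Za f = - X f \<and> Zf a = - X a)" using claim2[OF a f Za Zf] by blast
  have s3: "\<not> (Zp f = X f \<and> Zf p = X p)" using claim1[OF p f Zp Zf] by blast
  have s4: "\<not> (Zp f = - X f \<and> Zf p = - X p)" using claim2[OF p f Zp Zf] by blast
  have v: "Za f \<in> {-1,0,1}" "Zp f \<in> {-1,0,1}" "Zf a \<in> {-1,0,1}" "X f \<in> {-1,0,1}" "X a \<in> {-1,0,1}"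
    using sv Mp_C[OF Za] Mp_C[OF Zp] Mp_C[OF Zf] XC by auto
  have e1: "Za f = X f \<or> Za f = - X f" using v(1,4) Zaf f(3) by auto
  have e2: "Zf a = X a \<or> Zf a = - X a" using v(3,5) 1 a(3) by auto
  have e3: "Zp f = X f \<or> Zp f = - X f" using v(2,4) 4 f(3) by auto
  have nz: "X f \<noteq> - X f" using f(3) by simp
  have "Zp f = Za f"
  proof (cases "Za f = X f")
    case True
    then have "Zf a = - X a" using s1 e2 by blast
    then have "Zf p = - X p" using 3 Xap by simp
    then have "Zp f = X f" using s4 e3 by blast
    then show ?thesis using True by simp
  next
    case False
    then have "Za f = - X f" using e1 by blast
    then have "Zf a = X a" using s2 e2 by blast
    then have "Zf p = X p" using 3 Xap by simp
    then have "Zp f = - X f" using s3 e3 by blast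
    then show ?thesis using \<open>Za f = - X f\<close> by simp
  qed
  then show ?thesis using 3 by simp
qed

end



lemma cocirc_index_neg: "cocirc_index I (neg V) = cocirc_index I V"
  by (auto simp: cocirc_index_def)
lemma lex_sigma_neg: "lex_sigma I (neg V) = - lex_sigma I V"
  by (simp add: lex_sigma_def cocirc_index_neg)

lemma sigma_idx:
  assumes "i < length I" "\<forall>j<i. V (I!j) = 0" "V (I!i) \<noteq> 0"
  shows "cocirc_index I V = i \<and> lex_sigma I V = V (I!i)"
proof -
  have ex: "\<exists>i<length I. V (I ! i) \<noteq> 0" using assms by blast
  have "(LEAST j. j < length I \<and> V (I ! j) \<noteq> 0) = i"
  proof (rule Least_equality)
    show "i < length I \<and> V (I ! i) \<noteq> 0" using assms by blast
  next
    fix y assume "y < length I \<and> V (I ! y) \<noteq> 0"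
    then show "i \<le> y" using assms(2) by (meson not_le)
  qed
  then have "cocirc_index I V = i" using ex by (simp add: cocirc_index_def)
  then show ?thesis using assms(1) by (simp add: lex_sigma_def)
qed

lemma idx_D:
  assumes "cocirc_index I V = i" "i < length I"
  shows "V (I!i) \<noteq> 0 \<and> (\<forall>j<i. V (I!j) = 0)"
proof -
  have ex: "\<exists>i<length I. V (I ! i) \<noteq> 0"
  proof (rule ccontr)
    assume "\<not> ?thesis"
    then have "cocirc_index I V = length I" by (auto simp: cocirc_index_def)
    then show False using assms by simp
  qed
  then have i: "i = (LEAST j. j < length I \<and> V (I ! j) \<noteq> 0)" using assms(1) by (simp add: cocirc_index_def)
  have "i < length I \<and> V (I ! i) \<noteq> 0" unfolding i by (rule LeastI_ex) (use ex in blast)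
  moreover have "\<forall>j<i. V (I!j) = 0"
  proof (intro allI impI)
    fix j assume "j < i"
    then have "\<not> (j < length I \<and> V (I ! j) \<noteq> 0)" unfolding i by (rule not_less_Least)
    then show "V (I!j) = 0" using \<open>j < i\<close> assms(2) by simp
  qed
  ultimately show ?thesis by blast
qed

context
  fixes E :: "'a set" and Om C :: "('a \<Rightarrow> int) set" and I :: "'a list" and p :: 'a
  assumes ext: "lex_ext E Om I p C" and IE: "set I \<subseteq> E"
begin

lemma pE: "p \<notin> E" using ext by (simp add: lex_ext_def single_ext_def)
lemma OM': "is_OM (insert p E) C" using ext by (simp add: lex_ext_def single_ext_def)
lemma del: "deletion C p = Om" using ext by (simp add: lex_ext_def single_ext_def)
lemma ins: "V \<in> Om \<Longrightarrow> V(p := lex_sigma I V) \<in> C" using ext by (simp add: lex_ext_def single_ext_def)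

lemma Ip: "I ! j \<noteq> p" if "j < length I" using IE pE that nth_mem by fastforce

lemma Min:
  assumes W: "W \<in> C" "W(p:=0) \<noteq> zerovec"
  shows "\<exists>V\<in>Om. V p = 0 \<and> V \<noteq> zerovec \<and> (\<forall>e. V e \<noteq> 0 \<longrightarrow> W e \<noteq> 0)"
proof -
  let ?s = "\<lambda>W. {e. restr_del p W e \<noteq> 0}"
  let ?P = "\<lambda>W'. W' \<in> C \<and> restr_del p W' \<noteq> zerovec \<and> ?s W' \<subseteq> ?s W"
  have PW: "?P W" using W by (simp add: restr_del_def)
  obtain W' where W': "?P W'" "\<forall>y. ?P y \<longrightarrow> card (?s W') \<le> card (?s y)"
    using ex_has_least_nat[of ?P W "\<lambda>W'. card (?s W')"] PW by blast
  have finW: "finite (?s W)"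
  proof -
    have "?s W \<subseteq> insert p E" using OM_out[OF OM' W(1)] by (auto simp: restr_del_def)
    then show ?thesis using OM_fin[OF OM'] finite_subset by blast
  qed
  have "restr_del p W' \<in> deletion C p"
    unfolding deletion_def
  proof (intro CollectI exI conjI)
    show "restr_del p W' = restr_del p W'" ..
    show "W' \<in> C" "restr_del p W' \<noteq> zerovec" using W'(1) by auto
    show "\<forall>Y'\<in>C. restr_del p Y' \<noteq> zerovec \<longrightarrow> \<not> (?s Y' \<subset> ?s W')"
    proof (intro ballI impI notI)
      fix Y' assume Y': "Y' \<in> C" "restr_del p Y' \<noteq> zerovec" "?s Y' \<subset> ?s W'"
      have "?P Y'" using Y' W'(1) by blast
      moreover have "card (?s Y') < card (?s W')"
        using psubset_card_mono[OF _ Y'(3)] finW W'(1) finite_subset by blast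
      ultimately show False using W'(2) by fastforce
    qed
  qed
  then have VOm: "restr_del p W' \<in> Om" using del by simp
  show ?thesis
  proof (rule bexI[where x="restr_del p W'"], intro conjI)
    show "restr_del p W' p = 0" by (simp add: restr_del_def)
    show "restr_del p W' \<noteq> zerovec" using W'(1) by blast
    show "\<forall>e. restr_del p W' e \<noteq> 0 \<longrightarrow> W e \<noteq> 0"
      using W'(1) by (auto simp: restr_del_def split: if_splits)
  qed (rule VOm)
qed

lemma Lprop:
  assumes W: "W \<in> C" "W p \<noteq> 0" "W(p:=0) \<noteq> zerovec"
  shows "W p = lex_sigma I (W(p:=0))"
proof -
  obtain V where V: "V \<in> Om" "V p = 0" "V \<noteq> zerovec" "\<forall>e. V e \<noteq> 0 \<longrightarrow> W e \<noteq> 0"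
    using Min[OF W(1,3)] by blast
  let ?V' = "V(p := lex_sigma I V)"
  have V'C: "?V' \<in> C" using ins[OF V(1)] .
  have sub: "\<And>e. ?V' e \<noteq> 0 \<Longrightarrow> W e \<noteq> 0" using V(4) W(2) by (auto split: if_splits)
  have "?V' = W \<or> ?V' = neg W" using OM_supp[OF OM' V'C W(1) sub] .
  then show ?thesis
  proof
    assume e: "?V' = W"
    have "\<And>x. x \<noteq> p \<Longrightarrow> W x = V x" using e by (metis fun_upd_other)
    then have "W(p:=0) = V" using V(2) by (auto simp: fun_eq_iff)
    moreover have "W p = lex_sigma I V" using e[symmetric] by simp
    ultimately show ?thesis by simp
  next
    assume e: "?V' = neg W"
    then have "W = neg ?V'" by simp
    then have "\<And>x. x \<noteq> p \<Longrightarrow> W x = - V x" by simp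
    then have "W(p:=0) = neg V" using V(2) by (auto simp: fun_eq_iff)
    moreover have "W p = - lex_sigma I V" using e by (metis fun_upd_same neg_app minus_minus)
    ultimately show ?thesis by (simp add: lex_sigma_neg)
  qed
qed

lemma Dprop:
  assumes W: "W \<in> C" "W p = 0" and i: "i < length I" "\<forall>j<i. W (I!j) = 0" "W (I!i) \<noteq> 0"
  shows "\<exists>V'\<in>C. V' p \<noteq> 0 \<and> (\<forall>e. e \<noteq> p \<longrightarrow> W e = 0 \<longrightarrow> V' e = 0)"
proof -
  have Wnz: "W(p:=0) \<noteq> zerovec"
  proof
    assume "W(p:=0) = zerovec"
    then have "(W(p:=0)) (I!i) = 0" by (simp add: zerovec_def)
    then show False using i(3) Ip[OF i(1)] by simp
  qed
  obtain V where V: "V \<in> Om" "V p = 0" "V \<noteq> zerovec" "\<forall>e. V e \<noteq> 0 \<longrightarrow> W e \<noteq> 0"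
    using Min[OF W(1) Wnz] by blast
  let ?V' = "V(p := lex_sigma I V)"
  have V'C: "?V' \<in> C" using ins[OF V(1)] .
  have sW: "lex_sigma I W = W (I!i)" using sigma_idx[OF i] by blast
  have sig: "lex_sigma I V \<noteq> 0"
  proof
    assume s0: "lex_sigma I V = 0"
    then have "?V' = V" using V(2) by (simp add: fun_eq_iff)
    then have sub: "\<And>e. V e \<noteq> 0 \<Longrightarrow> W e \<noteq> 0" using V(4) by blast
    have VC: "V \<in> C" using V'C \<open>?V' = V\<close> by simp
    have "V = W \<or> V = neg W" using OM_supp[OF OM' VC W(1) sub] .
    then show False
    proof
      assume "V = W" then show False using s0 sW i(3) by simp
    next
      assume "V = neg W" then show False using s0 sW i(3) by (simp add: lex_sigma_neg)
    qed
  qed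
  show ?thesis
  proof (rule bexI[where x="?V'"], intro conjI)
    show "?V' p \<noteq> 0" using sig by simp
    show "\<forall>e. e \<noteq> p \<longrightarrow> W e = 0 \<longrightarrow> ?V' e = 0" using V(4) by auto
  qed (rule V'C)
qed

end



theorem lemma3p5:
  fixes E :: "'a set" and Om Om' :: "('a \<Rightarrow> int) set" and r :: nat
    and f p :: 'a and I :: "'a list" and X Y :: "'a \<Rightarrow> int" and i :: nat
  assumes "is_OM E Om" and "om_rank E Om = r"
    and "f \<in> E"
    and "distinct I" and "om_indep E Om (set I)" and "length I \<le> r"
    and "lex_ext E Om I p Om'"
    and "X \<in> Om'" and "Y \<in> Om'" and "conformal (insert p E) X Y"
    and "X p = Y p" and "X p \<noteq> 0"
    and "is_edge (insert p E) Om' (comp X Y)"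
    and "i < length I" and "cocirc_index I X = i" and "cocirc_index I Y = i"
    and "f \<noteq> I ! i"
    and "X f \<noteq> Y f \<or> (X f = 0 \<and> Y f = 0) \<or> Dir (insert p E) Om' (I ! i) f X Y \<noteq> 0"
  shows "Dir (insert p E) Om' (I ! i) f X Y = Dir (insert p E) Om' p f X Y
     \<and> (X f = Y f \<and> X f \<noteq> 0 \<longrightarrow> Dir (insert p E) Om' f (I ! i) X Y = Dir (insert p E) Om' f p X Y)"
proof -
  note ext = assms(7)
  have IE: "set I \<subseteq> E" using assms(5) by (simp add: om_indep_def)
  note OM = OM'[OF ext IE]
  have pE: "p \<notin> E" using pE[OF ext IE] .
  have edge: "int (om_rank_of (insert p E) Om' (zset (insert p E) (comp X Y))) = int (om_rank (insert p E) Om') - 2"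
    using assms(13) by (simp add: is_edge_def)
  note ctx = OM assms(8,9,10) edge assms(11,12)
  define a where "a = I ! i"
  have aE: "a \<in> E" using IE assms(14) a_def nth_mem by blast
  have ap: "a \<noteq> p" using aE pE by blast
  have fp: "f \<noteq> p" using assms(3) pE by blast
  have Xi: "X a \<noteq> 0" "\<forall>j<i. X (I!j) = 0" using idx_D[OF assms(15,14)] a_def by auto
  have Yi: "Y a \<noteq> 0" "\<forall>j<i. Y (I!j) = 0" using idx_D[OF assms(16,14)] a_def by auto
  have Xa: "X a = Y a" using conf_eq[OF ctx Xi(1) Yi(1)] .
  have Ij: "\<And>j. j < i \<Longrightarrow> I ! j \<in> zset (insert p E) (comp X Y)"
  proof -
    fix j assume j: "j < i"
    then have "I ! j \<in> E" using IE assms(14) nth_mem by (metis order.strict_trans subsetD)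
    then show "I ! j \<in> zset (insert p E) (comp X Y)" using Xi(2) Yi(2) j F_iff[OF ctx] by simp
  qed
  have Xpa: "X p = X a"
  proof -
    have nz: "X(p:=0) \<noteq> zerovec"
    proof
      assume "X(p:=0) = zerovec"
      then have "(X(p:=0)) a = 0" by (simp add: zerovec_def)
      then show False using Xi(1) ap by simp
    qed
    have "X p = lex_sigma I (X(p:=0))" using Lprop[OF ext IE assms(8) assms(12) nz] .
    also have "\<dots> = X a"
    proof -
      have "\<forall>j<i. (X(p:=0)) (I!j) = 0" using Xi(2) Ip[OF ext IE] assms(14) by auto
      moreover have "(X(p:=0)) (I!i) \<noteq> 0" using Xi(1) ap a_def by simp
      ultimately show ?thesis using sigma_idx[OF assms(14)] a_def ap by auto
    qed
    finally show ?thesis .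
  qed
  have aE': "a \<in> insert p E" using aE by simp
  have pE': "p \<in> insert p E" by simp
  have fE': "f \<in> insert p E" using assms(3) by simp
  obtain Za where Za: "Mp (insert p E) Om' X Y a Za" using M_exists[OF ctx aE' Xa Xi(1)] by blast
  obtain Zp where Zp: "Mp (insert p E) Om' X Y p Zp" using M_exists[OF ctx pE' assms(11,12)] by blast
  have DA: "Dir (insert p E) Om' a f X Y = Za f"
    using elim_eq[OF ctx aE' Xi(1) Za] Xa Xi(1) by (simp add: Dir_def)
  have DP: "Dir (insert p E) Om' p f X Y = Zp f"
    using elim_eq[OF ctx pE' assms(12) Zp] assms(11,12) by (simp add: Dir_def)
  show ?thesis
  proof (cases "X f = Y f \<and> X f \<noteq> 0")
    case False
    then have "Za f = Zp f" using Mp_off[OF ctx Za fE' False] Mp_off[OF ctx Zp fE' False] by simp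
    have "Dir (insert p E) Om' (I ! i) f X Y = Dir (insert p E) Om' p f X Y" using DA DP a_def \<open>Za f = Zp f\<close> by simp
    then show ?thesis using False by blast
  next
    case True
    then have "Dir (insert p E) Om' (I ! i) f X Y \<noteq> 0" using assms(18) by blast
    then have Zaf: "Za f \<noteq> 0" using DA a_def by simp
    obtain Zf where Zf: "Mp (insert p E) Om' X Y f Zf" using M_exists[OF ctx fE'] True by blast
    have lexprop: "\<And>Z. Mp (insert p E) Om' X Y f Z \<Longrightarrow> Z a \<noteq> 0 \<Longrightarrow> Z p \<noteq> 0 \<Longrightarrow> Z p = Z a"
    proof -
      fix Z assume Z: "Mp (insert p E) Om' X Y f Z" "Z a \<noteq> 0" "Z p \<noteq> 0"
      have ZC: "Z \<in> Om'" using Mp_C[OF ctx Z(1)] .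
      have nz: "Z(p:=0) \<noteq> zerovec"
      proof
        assume "Z(p:=0) = zerovec"
        then have "(Z(p:=0)) a = 0" by (simp add: zerovec_def)
        then show False using Z(2) ap by simp
      qed
      have "Z p = lex_sigma I (Z(p:=0))" using Lprop[OF ext IE ZC Z(3) nz] .
      also have "\<dots> = Z a"
      proof -
        have "\<forall>j<i. (Z(p:=0)) (I!j) = 0" using Mp_F[OF ctx Z(1) Ij] by simp
        moreover have "(Z(p:=0)) (I!i) \<noteq> 0" using Z(2) ap a_def by simp
        ultimately show ?thesis using sigma_idx[OF assms(14)] a_def ap by auto
      qed
      finally show "Z p = Z a" .
    qed
    have Dprop: "\<And>Z. Mp (insert p E) Om' X Y p Z \<Longrightarrow> Z f = 0 \<Longrightarrow> Z a \<noteq> 0 \<Longrightarrow> False"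
    proof -
      fix Z assume Z: "Mp (insert p E) Om' X Y p Z" "Z f = 0" "Z a \<noteq> 0"
      have ZC: "Z \<in> Om'" using Mp_C[OF ctx Z(1)] .
      have Zp0: "Z p = 0" using Mp_g[OF ctx Z(1)] .
      have ZI: "\<forall>j<i. Z (I!j) = 0" using Mp_F[OF ctx Z(1) Ij] by simp
      obtain V' where V': "V' \<in> Om'" "V' p \<noteq> 0" "\<forall>e. e \<noteq> p \<longrightarrow> Z e = 0 \<longrightarrow> V' e = 0"
      proof -
        have "Z (I!i) \<noteq> 0" using Z(3) a_def by simp
        then show ?thesis using Dprop[OF ext IE ZC Zp0 assms(14) ZI] that by blast
      qed
      have pF: "p \<notin> zset (insert p E) (comp X Y)" using assms(12) by (simp add: F_iff[OF ctx])
      have ZF: "\<forall>e\<in>insert f (zset (insert p E) (comp X Y)). Z e = 0" using Z(2) Mp_F[OF ctx Z(1)] by blast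
      have VF: "\<forall>e\<in>insert f (zset (insert p E) (comp X Y)). V' e = 0"
      proof
        fix e assume e: "e \<in> insert f (zset (insert p E) (comp X Y))"
        then have "e \<noteq> p" using fp pF by auto
        moreover have "Z e = 0" using ZF e by blast
        ultimately show "V' e = 0" using V'(3) by blast
      qed
      have Xf: "X f \<noteq> 0" using True by blast
      have "V' = Z \<or> V' = neg Z" using U[OF ctx disjI1[OF refl] Xf fE' V'(1) VF ZC ZF] .
      then show False using V'(2) Zp0 by auto
    qed
    have c: "Zp f = Za f \<and> Zf a = Zf p"
      using core[OF ctx aE' Xa Xi(1) pE' assms(11,12) fE' True[THEN conjunct1] True[THEN conjunct2]
          Xpa[symmetric] lexprop Dprop Za Zaf Zp Zf] Xpa by simp
    have DFA: "Dir (insert p E) Om' f a X Y = Zf a"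
      using elim_eq[OF ctx fE' _ Zf] True by (simp add: Dir_def)
    have DFP: "Dir (insert p E) Om' f p X Y = Zf p"
      using elim_eq[OF ctx fE' _ Zf] True by (simp add: Dir_def)
    show ?thesis using c DA DP DFA DFP a_def by simp
  qed
qed


end
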